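(* For $n\ge2$, $$\mathbf{cf}_{n,2}(p,q)|_{p^0}=q^{\binom{n-1}{2}}[n-1]_q.$$ Moreover, $\mathbf{cf}_{4,2}(p,q)|_{p^1}=q^2+q^3$, and for $n\ge5$, $$\mathbf{cf}_{n,2}(p,q)|_{p^1}=\binom{n-2}{2}q^{\binom{n}{2}-3}+q^{\binom{n-1}{2}-2}\sum_{i=0}^{n-3}\left(\binom{n-3}{2}+i\right)q^i.$$
   Context: $F_1(p,q)=q$, $F_2(p,q)=q^2$ and $F_m(p,q)=qF_{m-1}(p,q)+pF_{m-2}(p,q)$ for $m\ge3$. Let $(x)_{\uparrow_{F,p,q,0}}=1$ and $(x)_{\uparrow_{F,p,q,k}}=x(x+F_1(p,q))\cdots(x+F_{k-1}(p,q))$ for $k\ge1$. Define the polynomials $\mathbf{cf}_{n,k}(p,q)$ for $0\le k\le n$ by $(x)_{\uparrow_{F,p,q,n}}=\sum_{k=0}^n\mathbf{cf}_{n,k}(p,q)x^k$. For a polynomial $f$ in $p$ with coefficients in $\mathbb{Q}[q]$, $f|_{p^s}$ denotes the coefficient of $p^s$. $[m]_q=1+q+\cdots+q^{m-1}$. *)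

theory Defs
  imports "HOL-Computational_Algebra.Polynomial"
begin

text \<open>Polynomials in p with coefficients in Q[q] are modelled as rat poly poly:
  the outer variable is p, the inner coefficients are polynomials in q.\<close>

definition qv :: "rat poly poly" where "qv = [:[:0, 1:]:]"
definition pv :: "rat poly poly" where "pv = [:0, 1:]"

text \<open>F 0 = 0 is an auxiliary convention so that the rising factorial starts with the factor x.\<close>
fun F :: "nat \<Rightarrow> rat poly poly" where
  "F 0 = 0"
| "F (Suc 0) = qv"
| "F (Suc (Suc 0)) = qv ^ 2"
| "F (Suc (Suc (Suc m))) = qv * F (Suc (Suc m)) + pv * F (Suc m)"

definition rising_F :: "nat \<Rightarrow> rat poly poly poly" where
  "rising_F n = (\<Prod>i<n. [:F i, 1:])"

definition cf :: "nat \<Rightarrow> nat \<Rightarrow> rat poly poly" where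
  "cf n k = coeff (rising_F n) k"

definition qint :: "nat \<Rightarrow> rat poly" where
  "qint m = (\<Sum>i<m. [:0, 1:] ^ i)"

end

theory Submission
  imports Defs
begin

abbreviation XX :: "rat poly" where "XX \<equiv> [:0, 1:]"

lemma ch2: "Suc n choose 2 = (n choose 2) + n"
  by (simp add: numeral_2_eq_2)

lemma qv_mult: "coeff (qv * f) k = XX * coeff f k"
  by (simp add: qv_def)

lemma pv_mult0: "coeff (pv * f) 0 = 0"
  by (simp add: pv_def)

lemma pv_mult1: "coeff (pv * f) (Suc k) = coeff f k"
  by (simp add: pv_def)

lemma F0: "n \<ge> 1 \<Longrightarrow> coeff (F n) 0 = XX ^ n"
proof (induction n rule: F.induct)
  case 1 then show ?case by simp
next
  case 2 then show ?case by (simp add: qv_def)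
next
  case 3 then show ?case by (simp add: qv_def power2_eq_square mult_to_poly)
next
  case (4 m)
  show ?case
  proof (cases m)
    case 0 then show ?thesis by (simp add: qv_mult pv_mult0 qv_def pv_def power2_eq_square)
  next
    case (Suc k) then show ?thesis using 4 by (simp add: qv_mult pv_mult0)
  qed
qed

lemma F1: "coeff (F n) 1 = of_nat (n - 2) * XX ^ (n - 2)"
proof (induction n rule: F.induct)
  case 1 then show ?case by simp
next
  case 2 then show ?case by (simp add: qv_def)
next
  case 3 then show ?case by (simp add: qv_def power2_eq_square mult_to_poly)
next
  case (4 m)
  have "coeff (F (Suc (Suc (Suc m)))) 1 = XX * coeff (F (Suc (Suc m))) 1 + coeff (F (Suc m)) 0"
    by (simp add: qv_mult pv_mult1)
  also have "\<dots> = XX * (of_nat m * XX ^ m) + XX ^ Suc m"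
    using 4 F0[of "Suc m"] by simp
  also have "\<dots> = of_nat (Suc m) * XX ^ Suc m"
    by (simp add: algebra_simps)
  finally show ?case by simp
qed

lemma rising_Suc: "rising_F (Suc n) = rising_F n * [:F n, 1:]"
  by (simp add: rising_F_def)

lemma coeff_lin0: "coeff (p * [:a, 1:]) 0 = a * coeff (p :: rat poly poly poly) 0"
  by (simp add: mult.commute)

lemma coeff_linS: "coeff (p * [:a, 1:]) (Suc k) = a * coeff p (Suc k) + coeff (p :: rat poly poly poly) k"
  by (simp add: mult.commute)

lemma cf_Suc0: "cf (Suc n) 0 = F n * cf n 0"
  by (simp add: cf_def rising_Suc coeff_lin0)

lemma cf_SucS: "cf (Suc n) (Suc k) = F n * cf n (Suc k) + cf n k"
  by (simp add: cf_def rising_Suc coeff_linS)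

lemma cf_0k: "cf 0 k = (if k = 0 then 1 else 0)"
  by (simp add: cf_def rising_F_def)

lemma pm0: "coeff (f * g) 0 = coeff f 0 * coeff g 0"
  by (simp add: coeff_mult_0)

lemma pm1: "coeff (f * g) 1 = coeff f 0 * coeff g 1 + coeff f 1 * coeff g 0"
  by (simp add: coeff_mult)

lemma cfz: "cf (Suc n) 0 = 0"
  by (induction n) (simp_all add: cf_Suc0 cf_0k)

lemma d0: "coeff (cf (Suc n) 1) 0 = XX ^ (Suc n choose 2)"
proof (induction n)
  case 0 then show ?case by (simp add: cf_SucS[of 0 0, simplified] cf_0k numeral_2_eq_2)
next
  case (Suc n)
  have "cf (Suc (Suc n)) 1 = F (Suc n) * cf (Suc n) 1"
    using cf_SucS[of "Suc n" 0] cfz[of n] by simp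
  then have "coeff (cf (Suc (Suc n)) 1) 0 = XX ^ Suc n * XX ^ (Suc n choose 2)"
    using Suc F0[of "Suc n"] by (simp add: pm0)
  then show ?case by (simp add: ch2[of "Suc n"] power_add mult.commute)
qed

lemma d1_rec: "coeff (cf (Suc (Suc n)) 1) 1 = XX ^ Suc n * coeff (cf (Suc n) 1) 1
   + coeff (F (Suc n)) 1 * XX ^ (Suc n choose 2)"
proof -
  have "cf (Suc (Suc n)) 1 = F (Suc n) * cf (Suc n) 1"
    using cf_SucS[of "Suc n" 0] cfz[of n] by simp
  then have "coeff (cf (Suc (Suc n)) 1) 1 = coeff (F (Suc n)) 0 * coeff (cf (Suc n) 1) 1 + coeff (F (Suc n)) 1 * coeff (cf (Suc n) 1) 0"
    by (simp only: pm1)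
  moreover have f0: "coeff (F (Suc n)) 0 = XX ^ Suc n" by (rule F0) simp
  ultimately show ?thesis by (simp only: f0 d0[of n])
qed

lemma alg1: "(x::'a::comm_semiring_1)^(n+3)*(c*x^t) + k*x^(n+1)*x^(t+2) = (c + k)*x^(t+n+3)"
proof -
  have e1: "t+n+3 = (n+3)+t" "t+n+3 = (n+1)+(t+2)" by simp_all
  have "x^(t+n+3) = x^(n+3)*x^t" by (subst e1(1), rule power_add)
  moreover have "x^(t+n+3) = x^(n+1)*x^(t+2)" by (subst e1(2), rule power_add)
  ultimately have "x^(n+3)*(c*x^t) = c*x^(t+n+3)" "x^(n+1)*x^(t+2) = x^(t+n+3)"
    by (simp_all add: ac_simps)
  then show ?thesis by (simp add: algebra_simps)
qed

lemma d1: "coeff (cf (n + 3) 1) 1 = of_nat ((n + 1) choose 2) * XX ^ ((n + 3 choose 2) - 2)"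
proof (induction n)
  case 0
  have a: "coeff (cf 1 1) 1 = 0" by (simp add: cf_SucS[of 0 0, simplified] cf_0k)
  have b: "coeff (cf 2 1) 1 = 0" using d1_rec[of 0] a by (simp add: F1 numeral_2_eq_2 qv_def)
  have "coeff (cf 3 1) 1 = 0" using d1_rec[of 1] b by (simp add: F1 numeral_2_eq_2 numeral_3_eq_3 qv_def mult_to_poly)
  then show ?case by simp
next
  case (Suc n)
  obtain t where t: "(n + 3 choose 2) = t + 2"
  proof -
    have "(n + 3 choose 2) \<ge> 2" using ch2[of "n+2"] ch2[of "n+1"] by (simp add: numeral_3_eq_3)
    then show ?thesis using that[of "(n + 3 choose 2) - 2"] by simp
  qed
  have fF: "coeff (F (n+3)) 1 = of_nat (n+1) * XX^(n+1)" using F1[of "n+3"] by simp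
  have t2: "(Suc n + 3 choose 2) = t + n + 5" using t ch2[of "n+3"] by simp
  have "coeff (cf (Suc n + 3) 1) 1 = XX ^ (n+3) * coeff (cf (n+3) 1) 1
     + coeff (F (n+3)) 1 * XX ^ (n + 3 choose 2)"
    using d1_rec[of "n+2"] by (simp add: numeral_3_eq_3)
  also have "\<dots> = XX ^ (n+3) * (of_nat ((n + 1) choose 2) * XX ^ t)
     + of_nat (n+1) * XX ^ (n+1) * XX ^ (t+2)"
    using Suc t fF by simp
  also have "\<dots> = of_nat ((n + 1 choose 2) + (n+1)) * XX ^ (t + n + 3)"
    by (subst of_nat_add[of "n+1 choose 2" "n+1"], rule alg1)
  also have "\<dots> = of_nat ((Suc n + 1) choose 2) * XX ^ ((Suc n + 3 choose 2) - 2)"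
  proof -
    have a: "(Suc n + 3 choose 2) - 2 = t + n + 3" using t2 by simp
    have b: "(Suc n + 1) choose 2 = (n+1 choose 2)+(n+1)" using ch2[of "n+1"] by simp
    show ?thesis by (simp only: a b)
  qed
  finally show ?case .
qed

lemma qint_Suc: "qint (Suc n) = 1 + XX * qint n"
  unfolding qint_def by (subst sum.lessThan_Suc_shift) (simp add: sum_distrib_left del: mult_pCons_left sum.lessThan_Suc)

lemma qint_atMost: "qint (Suc K) = (\<Sum>i=0..K. XX^i)"
  by (simp add: qint_def atLeast0AtMost lessThan_Suc_atMost)

lemma alg2: "(x::'a::comm_semiring_1)^(Suc n)*(x^c*q) + x^(c+n) = x^(c+n)*(1+x*q)"
  by (simp add: power_add algebra_simps)

lemma cf2_Suc: "cf (Suc n) 2 = F n * cf n 2 + cf n 1"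
  using cf_SucS[of n 1] by (simp add: numeral_2_eq_2)

lemma c0: "coeff (cf (Suc n) 2) 0 = XX^(n choose 2) * qint n"
proof (induction n)
  case 0 then show ?case by (simp add: cf2_Suc cf_0k qint_def)
next
  case (Suc n)
  have f0: "coeff (F (Suc n)) 0 = XX ^ Suc n" by (rule F0) simp
  have "coeff (cf (Suc (Suc n)) 2) 0 = coeff (F (Suc n)) 0 * coeff (cf (Suc n) 2) 0 + coeff (cf (Suc n) 1) 0"
    by (simp only: cf2_Suc pm0 coeff_add)
  also have "\<dots> = XX^(Suc n) * (XX^(n choose 2) * qint n) + XX^((n choose 2) + n)"
    by (simp only: f0 Suc d0 ch2)
  also have "\<dots> = XX^((n choose 2) + n) * qint (Suc n)"
    by (simp only: alg2 qint_Suc)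
  finally show ?case by (simp only: ch2)
qed

lemma c1_rec: "coeff (cf (Suc n) 2) 1 = coeff (F n) 0 * coeff (cf n 2) 1 + coeff (F n) 1 * coeff (cf n 2) 0 + coeff (cf n 1) 1"
  by (simp only: cf2_Suc pm1 coeff_add)

lemma alg3: "(x::'a::comm_semiring_1)^(m+4)*(c*x^(s+m+2) + x^s*S) + k*x^(m+2)*(x^(s+2)*(G + x^(m+2))) + c*x^(s+m+3)
   = (c + k)*x^(s+2*m+6) + x^(s+m+3)*(c + x*S + k*x*G)"
  by (simp add: power_add algebra_simps eval_nat_numeral)

lemma Sshift: "(\<Sum>i=0..Suc K. of_nat(A+K+i)*(x::'a::comm_semiring_1)^i)
   = of_nat(A+K) + x*(\<Sum>i=0..K. of_nat(A+i)*x^i) + of_nat(K+1)*x*(\<Sum>i=0..K. x^i)"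
proof -
  have "(\<Sum>i=0..Suc K. of_nat(A+K+i)*x^i) = of_nat(A+K) + (\<Sum>i=0..K. of_nat(A+K+Suc i)*x^Suc i)"
    unfolding sum.atLeast0_atMost_Suc_shift by (simp add: o_def ac_simps del: sum.atLeast0_atMost_Suc)
  also have "(\<Sum>i=0..K. of_nat(A+K+Suc i)*x^Suc i) = (\<Sum>i=0..K. x*(of_nat(A+i)*x^i) + of_nat(K+1)*x*x^i)"
    by (rule sum.cong) (simp_all add: algebra_simps)
  also have "\<dots> = x*(\<Sum>i=0..K. of_nat(A+i)*x^i) + of_nat(K+1)*x*(\<Sum>i=0..K. x^i)"
    by (simp add: sum.distrib sum_distrib_left)
  finally show ?thesis by (simp add: add.assoc)
qed

lemma c1: "coeff (cf (m+4) 2) 1 = of_nat ((m+2) choose 2) * XX^((m+4 choose 2) - 3)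
   + XX^((m+3 choose 2) - 2) * (\<Sum>i=0..m+1. of_nat (((m+1) choose 2) + i) * XX^i)"
proof (induction m)
  case 0
  have z1: "coeff (cf 1 2) 1 = 0" using cf2_Suc[of 0] by (simp add: cf_0k)
  have z2: "coeff (cf 2 2) 1 = 0" using c1_rec[of 1] z1 d1_rec[of 0]
    by (simp add: F1 numeral_2_eq_2 qv_def cf_SucS[of 0 0, simplified] cf_0k)
  have y: "coeff (cf 2 1) 1 = 0" using d1_rec[of 0]
    by (simp add: F1 numeral_2_eq_2 qv_def cf_SucS[of 0 0, simplified] cf_0k)
  have e3: "coeff (F 3) 1 = XX" using F1[of 3] by simp
  have z3: "coeff (cf 3 2) 1 = 0" using c1_rec[of 2] z2 y F1[of 2] by (simp add: numeral_3_eq_3)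
  have "coeff (cf 4 2) 1 = XX * coeff (cf 3 2) 0" using c1_rec[of 3] z3 d1[of 0] e3 by (simp add: eval_nat_numeral)
  also have "\<dots> = XX * (XX * (1 + XX))" using c0[of 2] by (simp add: numeral_3_eq_3 qint_def eval_nat_numeral)
  finally show ?case by (simp add: eval_nat_numeral algebra_simps)
next
  case (Suc m)
  obtain s where s: "(m + 3 choose 2) = s + 2"
  proof -
    have "(m + 3 choose 2) \<ge> 2" using ch2[of "m+2"] ch2[of "m+1"] by (simp add: numeral_3_eq_3)
    then show ?thesis using that[of "(m + 3 choose 2) - 2"] by simp
  qed
  have h4: "Suc (m+3) = m+4" "Suc (m+4) = m+5" by simp_all
  have s4: "(m + 4 choose 2) = s + m + 5" using s ch2[of "m+3"] unfolding h4 by linarith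
  have s5: "(m + 5 choose 2) = s + 2*m + 9" using s4 ch2[of "m+4"] unfolding h4 by linarith
  have f0: "coeff (F (m+4)) 0 = XX ^ (m+4)" by (rule F0) simp
  have f1: "coeff (F (m+4)) 1 = of_nat (m+2) * XX^(m+2)" using F1[of "m+4"] by simp
  have q: "qint (m+3) = (\<Sum>i=0..m+1. XX^i) + XX^(m+2)"
  proof -
    have h: "m+3 = Suc (m+2)" "m+2 = Suc (m+1)" by simp_all
    have "qint (Suc (m+2)) = qint (m+2) + XX^(m+2)" unfolding qint_def by (rule sum.lessThan_Suc)
    then show ?thesis unfolding h(1) by (simp only: h(2) qint_atMost)
  qed
  have h23: "Suc (m+2) = m+3" "Suc (m+1) = m+2" by simp_all
  have cc: "(m+3) choose 2 = ((m+2) choose 2) + (m+2)" using ch2[of "m+2"] unfolding h23 .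
  have cc2: "(m+2) choose 2 = ((m+1) choose 2) + (m+1)" using ch2[of "m+1"] unfolding h23 .
  define c :: "rat poly" where "c = of_nat ((m+2) choose 2)"
  define S where "S = (\<Sum>i=0..m+1. of_nat (((m+1) choose 2) + i) * XX^i)"
  define G where "G = (\<Sum>i=0..m+1. XX^i)"
  have Sh: "(\<Sum>i=0..m+2. of_nat (((m+2) choose 2) + i) * XX^i) = c + XX*S + of_nat(m+2)*XX*G"
    using Sshift[of "(m+1) choose 2" "m+1" XX] unfolding c_def S_def G_def cc2
    by (simp add: add.assoc)
  have "coeff (cf (Suc m + 4) 2) 1 = coeff (F (m+4)) 0 * coeff (cf (m+4) 2) 1
      + coeff (F (m+4)) 1 * coeff (cf (m+4) 2) 0 + coeff (cf (m+4) 1) 1"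
    using c1_rec[of "m+4"] by simp
  also have "\<dots> = XX^(m+4)*(c*XX^(s+m+2) + XX^s*S) + of_nat(m+2)*XX^(m+2)*(XX^(s+2)*(G + XX^(m+2)))
      + c*XX^(s+m+3)"
  proof -
    have hh: "m+1+3 = m+4" "m+1+1 = m+2" "Suc (m+3) = m+4" by simp_all
    have i1: "(m + 4 choose 2) - 3 = s+m+2" "(m + 3 choose 2) - 2 = s" "(m + 4 choose 2) - 2 = s+m+3"
      using s s4 by simp_all
    have A: "coeff (cf (m+4) 2) 1 = c*XX^(s+m+2) + XX^s*S"
      using Suc unfolding i1 c_def S_def .
    have B: "coeff (cf (m+4) 2) 0 = XX^(s+2)*(G + XX^(m+2))"
      using c0[of "m+3"] unfolding hh s q G_def .
    have C: "coeff (cf (m+4) 1) 1 = c*XX^(s+m+3)"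
      using d1[of "m+1"] unfolding hh i1 c_def .
    show ?thesis by (simp only: A B C f0 f1 mult.assoc)
  qed
  also have "\<dots> = (c + of_nat(m+2))*XX^(s+2*m+6) + XX^(s+m+3)*(c + XX*S + of_nat(m+2)*XX*G)"
    by (rule alg3)
  also have "\<dots> = of_nat ((Suc m+2) choose 2) * XX^((Suc m+4 choose 2) - 3)
   + XX^((Suc m+3 choose 2) - 2) * (\<Sum>i=0..Suc m+1. of_nat (((Suc m+1) choose 2) + i) * XX^i)"
  proof -
    have hs: "Suc m+4 = m+5" "Suc m+3 = m+4" "Suc m+2 = m+3" "Suc m+1 = m+2" by simp_all
    have a: "(Suc m+4 choose 2) - 3 = s+2*m+6" unfolding hs s5 by simp
    have b: "(Suc m+3 choose 2) - 2 = s+m+3" unfolding hs s4 by simp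
    have d: "of_nat ((Suc m+2) choose 2) = c + of_nat(m+2)" unfolding hs cc c_def by simp
    have e: "(\<Sum>i=0..Suc m+1. of_nat (((Suc m+1) choose 2) + i) * XX^i) = c + XX*S + of_nat(m+2)*XX*G"
      unfolding hs by (rule Sh)
    show ?thesis by (simp only: a b d e)
  qed
  finally show ?case .
qed

theorem theorem15:
  shows "(\<forall>n\<ge>2. coeff (cf n 2) 0 = [:0, 1:] ^ ((n - 1) choose 2) * qint (n - 1))
    \<and> coeff (cf 4 2) 1 = [:0, 1:] ^ 2 + [:0, 1:] ^ 3
    \<and> (\<forall>n\<ge>5. coeff (cf n 2) 1 =
          of_nat ((n - 2) choose 2) * [:0, 1:] ^ ((n choose 2) - 3)
          + [:0, 1:] ^ (((n - 1) choose 2) - 2)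
            * (\<Sum>i = 0..n - 3. of_nat (((n - 3) choose 2) + i) * [:0, 1:] ^ i))"
proof (intro conjI allI impI)
  fix n :: nat assume "n \<ge> 2"
  then have "n = Suc (n - 1)" by simp
  then show "coeff (cf n 2) 0 = [:0, 1:] ^ ((n - 1) choose 2) * qint (n - 1)"
    using c0[of "n - 1"] by metis
next
  show "coeff (cf 4 2) 1 = [:0, 1:] ^ 2 + [:0, 1:] ^ 3"
    using c1[of 0] by (simp add: eval_nat_numeral algebra_simps)
next
  fix n :: nat assume "n \<ge> 5"
  then obtain m where m: "n = m + 4" 
  proof -
    have "n = (n - 4) + 4" using \<open>n \<ge> 5\<close> by simp
    then show ?thesis by (rule that)
  qed
  have h: "n - 2 = m + 2" "n - 1 = m + 3" "n - 3 = m + 1" using m by simp_all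
  show "coeff (cf n 2) 1 =
          of_nat ((n - 2) choose 2) * [:0, 1:] ^ ((n choose 2) - 3)
          + [:0, 1:] ^ (((n - 1) choose 2) - 2)
            * (\<Sum>i = 0..n - 3. of_nat (((n - 3) choose 2) + i) * [:0, 1:] ^ i)"
    unfolding h unfolding m by (rule c1)
qed

end
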